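(* Let $y$ be a string over an alphabet $\Sigma$ whose last character occurs nowhere else in $y$. For any backward edge $((x,x^R),\alpha^R,(\alpha x, x^R\alpha^R))$ of the affix tree $\mathrm{ATree}(y)$ (with $\alpha\in\Sigma^+$), we have: $x\in\mathcal{L}$ and $\alpha x\notin\mathcal{L}$ if and only if $(x,a,ax)$ is an implicit modified Weiner link of $\mathrm{ST}(y)$, where $a=\alpha[|\alpha|]$ is the last character of $\alpha$.
   Context: $\mathrm{Substr}(y)$ is the set of substrings of $y$; $x^R$ is the reversal of $x$. $\mathrm{BegPos}(x)=\{i\mid y[i..i+|x|-1]=x\}$, $\mathrm{EndPos}(x)=\{i\mid y[i-|x|+1..i]=x\}$. For $x\in\mathrm{Substr}(y)$, $\overrightarrow{x}$ is the longest string $z$ with $\mathrm{BegPos}(z)=\mathrm{BegPos}(x)$ and $\overleftarrow{x}$ is the longest string $z$ with $\mathrm{EndPos}(z)=\mathrm{EndPos}(x)$. $\mathcal{L}=\{\overrightarrow{x}\mid x\in\mathrm{Substr}(y)\}$, $\mathcal{R}=\{\overleftarrow{x}\mid x\in\mathrm{Substr}(y)\}$. The suffix tree $\mathrm{ST}(y)$ has node set $\mathcal{L}$. The set of modified Weiner links of $\mathrm{ST}(y)$ is $\{(x,a,ax)\mid a\in\Sigma, x\in\mathcal{L}, ax\in\mathrm{Substr}(y)\}$; such a link is explicit if $ax\in\mathcal{L}$ and implicit otherwise. $\mathrm{ATree}(y)$ has node set $V_A=\{(x,x^R)\mid x\in\mathcal{L}\cup\mathcal{R}\}$ and backward edge set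 $\{((x,x^R),\alpha^R,(\alpha x, x^R\alpha^R))\mid x^R, x^R\alpha^R\in\{z^R : z\in\mathcal{L}\cup\mathcal{R}\}, \alpha\in\Sigma^+, x^R\alpha^R[1..i]\notin\{z^R : z\in\mathcal{L}\cup\mathcal{R}\}\ \text{for all }1\le i<|\alpha|\}$. *)

theory Defs
  imports Main
begin

text \<open>Strings are lists over an arbitrary alphabet type 'a. Positions are 0-indexed.\<close>

definition Substr :: "'a list \<Rightarrow> 'a list set" where
  "Substr y = {x. \<exists>u v. y = u @ x @ v}"

definition BegPos :: "'a list \<Rightarrow> 'a list \<Rightarrow> nat set" where
  "BegPos y x = {i. i + length x \<le> length y \<and> take (length x) (drop i y) = x}"

text \<open>End position i (0-indexed, inclusive end): x = y[i-|x|+1..i]; we record i+1.\<close>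
definition EndPos :: "'a list \<Rightarrow> 'a list \<Rightarrow> nat set" where
  "EndPos y x = {j. length x \<le> j \<and> j \<le> length y \<and> take (length x) (drop (j - length x) y) = x}"

definition rext :: "'a list \<Rightarrow> 'a list \<Rightarrow> 'a list" where
  "rext y x = (THE z. BegPos y z = BegPos y x \<and>
      (\<forall>z'. BegPos y z' = BegPos y x \<longrightarrow> length z' \<le> length z))"

definition lext :: "'a list \<Rightarrow> 'a list \<Rightarrow> 'a list" where
  "lext y x = (THE z. EndPos y z = EndPos y x \<and>
      (\<forall>z'. EndPos y z' = EndPos y x \<longrightarrow> length z' \<le> length z))"

definition Lset :: "'a list \<Rightarrow> 'a list set" where
  "Lset y = {rext y x | x. x \<in> Substr y}"

definition Rset :: "'a list \<Rightarrow> 'a list set" where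
  "Rset y = {lext y x | x. x \<in> Substr y}"

definition mod_weiner_links :: "'a list \<Rightarrow> ('a list \<times> 'a \<times> 'a list) set" where
  "mod_weiner_links y = {(x, a, a # x) | x a. x \<in> Lset y \<and> a # x \<in> Substr y}"

definition implicit_mwl :: "'a list \<Rightarrow> 'a list \<Rightarrow> 'a \<Rightarrow> bool" where
  "implicit_mwl y x a \<longleftrightarrow> (x, a, a # x) \<in> mod_weiner_links y \<and> a # x \<notin> Lset y"

definition RevNodes :: "'a list \<Rightarrow> 'a list set" where
  "RevNodes y = {rev z | z. z \<in> Lset y \<union> Rset y}"

definition ATree_nodes :: "'a list \<Rightarrow> ('a list \<times> 'a list) set" where
  "ATree_nodes y = {(x, rev x) | x. x \<in> Lset y \<union> Rset y}"

definition ATree_backward_edges ::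
  "'a list \<Rightarrow> (('a list \<times> 'a list) \<times> 'a list \<times> ('a list \<times> 'a list)) set" where
  "ATree_backward_edges y =
     {((x, rev x), rev \<alpha>, (\<alpha> @ x, rev x @ rev \<alpha>)) | x \<alpha>.
        rev x \<in> RevNodes y \<and> rev x @ rev \<alpha> \<in> RevNodes y \<and> \<alpha> \<noteq> [] \<and>
        (\<forall>i. 1 \<le> i \<and> i < length \<alpha> \<longrightarrow> rev x @ take i (rev \<alpha>) \<notin> RevNodes y)}"

end

theory Submission
  imports Defs
begin

lemma the_max_len:
  assumes bound: "\<And>z. P z \<Longrightarrow> length z \<le> N"
    and uniq: "\<And>z1 z2. P z1 \<Longrightarrow> P z2 \<Longrightarrow> length z1 = length z2 \<Longrightarrow> z1 = z2"
    and ex: "P ww"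
  shows "P (THE z. P z \<and> (\<forall>z'. P z' \<longrightarrow> length z' \<le> length z))
     \<and> (\<forall>z'. P z' \<longrightarrow> length z' \<le> length (THE z. P z \<and> (\<forall>z'. P z' \<longrightarrow> length z' \<le> length z)))"
proof -
  define S where "S = length ` {z. P z}"
  have fin: "finite S" unfolding S_def using bound
    by (metis (no_types, lifting) finite_atMost finite_subset image_subset_iff atMost_iff mem_Collect_eq)
  have ne: "S \<noteq> {}" unfolding S_def using ex by auto
  have "Max S \<in> S" using fin ne by simp
  then obtain m where m: "P m" "length m = Max S" unfolding S_def by auto
  have mx: "\<forall>z'. P z' \<longrightarrow> length z' \<le> length m"
    using m fin unfolding S_def by auto
  have "\<exists>!z. P z \<and> (\<forall>z'. P z' \<longrightarrow> length z' \<le> length z)"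
  proof (rule ex1I[of _ m])
    show "P m \<and> (\<forall>z'. P z' \<longrightarrow> length z' \<le> length m)" using m mx by simp
  next
    fix z assume "P z \<and> (\<forall>z'. P z' \<longrightarrow> length z' \<le> length z)"
    then show "z = m" using mx m uniq by (meson le_antisym)
  qed
  from theI'[OF this] show ?thesis by blast
qed

lemma BegPos_nonempty: "x \<in> Substr y \<Longrightarrow> BegPos y x \<noteq> {}"
proof -
  assume "x \<in> Substr y"
  then obtain u v where "y = u @ x @ v" unfolding Substr_def by auto
  then have "length u \<in> BegPos y x" unfolding BegPos_def by auto
  then show ?thesis by auto
qed

lemma BegPos_substr: "i \<in> BegPos y z \<Longrightarrow> z \<in> Substr y"
proof -
  assume "i \<in> BegPos y z"
  then have a: "z = take (length z) (drop i y)" unfolding BegPos_def by auto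
  have "y = take i y @ take (length z) (drop i y) @ drop (length z) (drop i y)"
    by (metis append_take_drop_id)
  then have "y = take i y @ z @ drop (length z) (drop i y)"
    by (simp only: a[symmetric])
  then show ?thesis unfolding Substr_def by blast
qed

lemma BegPos_len: "i \<in> BegPos y z \<Longrightarrow> length z \<le> length y"
  unfolding BegPos_def by auto

lemma BegPos_eq: "i \<in> BegPos y z \<Longrightarrow> z = take (length z) (drop i y)"
  unfolding BegPos_def by auto

lemma EndPos_nonempty: "x \<in> Substr y \<Longrightarrow> EndPos y x \<noteq> {}"
proof -
  assume "x \<in> Substr y"
  then obtain u v where "y = u @ x @ v" unfolding Substr_def by auto
  then have "length u + length x \<in> EndPos y x" unfolding EndPos_def by auto
  then show ?thesis by auto
qed

lemma EndPos_substr: "j \<in> EndPos y z \<Longrightarrow> z \<in> Substr y"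
  unfolding EndPos_def
proof (clarsimp)
  assume a: "length z \<le> j" "j \<le> length y" "take (length z) (drop (j - length z) y) = z"
  have "y = take (j - length z) y @ take (length z) (drop (j - length z) y) @ drop (length z) (drop (j - length z) y)"
    by (metis append_take_drop_id)
  then have "y = take (j - length z) y @ z @ drop (length z) (drop (j - length z) y)"
    by (simp only: a(3))
  then show "z \<in> Substr y" unfolding Substr_def by blast
qed

lemma rext_props:
  assumes "x \<in> Substr y"
  shows "BegPos y (rext y x) = BegPos y x \<and> (\<forall>z'. BegPos y z' = BegPos y x \<longrightarrow> length z' \<le> length (rext y x))"
  unfolding rext_def
proof (rule the_max_len[where N = "length y" and ww = x])
  obtain i where i: "i \<in> BegPos y x" using BegPos_nonempty[OF assms] by auto
  show "\<And>z. BegPos y z = BegPos y x \<Longrightarrow> length z \<le> length y"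
    using i BegPos_len by blast
  show "\<And>z1 z2. BegPos y z1 = BegPos y x \<Longrightarrow> BegPos y z2 = BegPos y x \<Longrightarrow> length z1 = length z2 \<Longrightarrow> z1 = z2"
    using i BegPos_eq by metis
qed simp

lemma lext_props:
  assumes "x \<in> Substr y"
  shows "EndPos y (lext y x) = EndPos y x"
  unfolding lext_def
proof -
  obtain j where j: "j \<in> EndPos y x" using EndPos_nonempty[OF assms] by auto
  have "\<And>z. EndPos y z = EndPos y x \<Longrightarrow> length z \<le> length y"
  proof -
    fix z assume "EndPos y z = EndPos y x"
    then have "j \<in> EndPos y z" using j by simp
    then show "length z \<le> length y" unfolding EndPos_def by simp
  qed
  moreover have "\<And>z1 z2. EndPos y z1 = EndPos y x \<Longrightarrow> EndPos y z2 = EndPos y x \<Longrightarrow> length z1 = length z2 \<Longrightarrow> z1 = z2"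
  proof -
    fix z1 z2 assume "EndPos y z1 = EndPos y x" "EndPos y z2 = EndPos y x" and l: "length z1 = length z2"
    then have "j \<in> EndPos y z1" "j \<in> EndPos y z2" using j by simp_all
    then have "z1 = take (length z1) (drop (j - length z1) y)" "z2 = take (length z2) (drop (j - length z2) y)"
      unfolding EndPos_def by simp_all
    then show "z1 = z2" using l by simp
  qed
  ultimately show "EndPos y (THE z. EndPos y z = EndPos y x \<and> (\<forall>z'. EndPos y z' = EndPos y x \<longrightarrow> length z' \<le> length z)) = EndPos y x"
    using the_max_len[where P = "\<lambda>z. EndPos y z = EndPos y x" and N = "length y" and ww = x] by blast
qed

lemma Rset_substr: "z \<in> Rset y \<Longrightarrow> z \<in> Substr y"
  unfolding Rset_def using lext_props EndPos_nonempty EndPos_substr by fastforce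

lemma Lset_char:
  "w \<in> Lset y \<longleftrightarrow> w \<in> Substr y \<and> (\<forall>z. BegPos y z = BegPos y w \<longrightarrow> length z \<le> length w)"
proof
  assume "w \<in> Lset y"
  then obtain x where x: "x \<in> Substr y" "w = rext y x" unfolding Lset_def by auto
  note p = rext_props[OF x(1)]
  then show "w \<in> Substr y \<and> (\<forall>z. BegPos y z = BegPos y w \<longrightarrow> length z \<le> length w)"
    using x BegPos_nonempty BegPos_substr by (metis ex_in_conv)
next
  assume a: "w \<in> Substr y \<and> (\<forall>z. BegPos y z = BegPos y w \<longrightarrow> length z \<le> length w)"
  note p = rext_props[of w y]
  obtain i where i: "i \<in> BegPos y w" using BegPos_nonempty a by blast
  have "rext y w = w"
    using p a i BegPos_eq by (metis le_antisym)
  then show "w \<in> Lset y" unfolding Lset_def using a by force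
qed

lemma BegPos_append:
  "j \<in> BegPos y (u @ v) \<longleftrightarrow> j \<in> BegPos y u \<and> j + length u \<in> BegPos y v"
proof -
  have "take (length u + length v) (drop j y) = u @ v \<longleftrightarrow>
     take (length u) (drop j y) = u \<and> take (length v) (drop (j + length u) y) = v"
    if len: "j + length u + length v \<le> length y"
  proof -
    have eq: "take (length u + length v) (drop j y) = take (length u) (drop j y) @ take (length v) (drop (j + length u) y)"
      by (simp add: take_add add.commute)
    have l1: "length (take (length u) (drop j y)) = length u" using len by simp
    show ?thesis unfolding eq using l1 by auto
  qed
  then show ?thesis unfolding BegPos_def by auto
qed

lemma Lset_suffix:
  assumes "u @ v \<in> Lset y" shows "v \<in> Lset y"
proof -
  have uv: "u @ v \<in> Substr y" "\<forall>z. BegPos y z = BegPos y (u @ v) \<longrightarrow> length z \<le> length (u @ v)"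
    using assms Lset_char by blast+
  obtain a b where "y = a @ (u @ v) @ b" using uv(1) unfolding Substr_def by blast
  then have "y = (a @ u) @ v @ b" by simp
  then have vs: "v \<in> Substr y" unfolding Substr_def by blast
  show ?thesis unfolding Lset_char
  proof (intro conjI vs allI impI, rule ccontr)
    fix z assume z: "BegPos y z = BegPos y v" and "\<not> length z \<le> length v"
    then have lt: "length v < length z" by simp
    have "BegPos y (u @ z) = BegPos y (u @ v)"
      using z unfolding set_eq_iff BegPos_append by simp
    then have "length (u @ z) \<le> length (u @ v)" using uv(2) by blast
    then show False using lt by simp
  qed
qed

theorem theorem7:
  fixes y :: "'a list" and x \<alpha> :: "'a list"
  assumes "y \<noteq> []" and "last y \<notin> set (butlast y)"
    and "((x, rev x), rev \<alpha>, (\<alpha> @ x, rev x @ rev \<alpha>)) \<in> ATree_backward_edges y"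
    and "\<alpha> \<noteq> []"
  shows "(x \<in> Lset y \<and> \<alpha> @ x \<notin> Lset y) \<longleftrightarrow> implicit_mwl y x (last \<alpha>)"
proof -
  have e1: "rev x @ rev \<alpha> \<in> RevNodes y"
    and e2: "\<forall>i. 1 \<le> i \<and> i < length \<alpha> \<longrightarrow> rev x @ take i (rev \<alpha>) \<notin> RevNodes y"
    using assms(3) unfolding ATree_backward_edges_def by auto
  have ax: "\<alpha> @ x \<in> Lset y \<union> Rset y"
  proof -
    obtain z where "rev x @ rev \<alpha> = rev z" "z \<in> Lset y \<union> Rset y"
      using e1 unfolding RevNodes_def by blast
    then show ?thesis by (metis rev_append rev_rev_ident)
  qed
  have axs: "\<alpha> @ x \<in> Substr y"
    using ax Rset_substr Lset_char by blast
  define a where "a = last \<alpha>"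
  obtain \<beta> where b: "\<alpha> = \<beta> @ [a]" using assms(4) a_def by (metis append_butlast_last_id)
  obtain p q where "y = p @ (\<alpha> @ x) @ q" using axs unfolding Substr_def by blast
  then have "y = (p @ \<beta>) @ (a # x) @ q" using b by simp
  then have as: "a # x \<in> Substr y" unfolding Substr_def by blast
  have ndeg: "length \<alpha> \<ge> 2 \<Longrightarrow> a # x \<notin> Lset y \<union> Rset y"
  proof
    assume "length \<alpha> \<ge> 2" "a # x \<in> Lset y \<union> Rset y"
    then have "rev x @ take 1 (rev \<alpha>) \<notin> RevNodes y" using e2 by auto
    moreover have "rev x @ take 1 (rev \<alpha>) = rev (a # x)" using b by simp
    ultimately show False using \<open>a # x \<in> Lset y \<union> Rset y\<close> unfolding RevNodes_def by blast
  qed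
  show ?thesis
  proof
    assume L: "x \<in> Lset y \<and> \<alpha> @ x \<notin> Lset y"
    have "a # x \<notin> Lset y"
    proof (cases "\<beta> = []")
      case True then show ?thesis using L b by simp
    next
      case False then have "length \<alpha> \<ge> 2" using b by (cases \<beta>) auto
      then show ?thesis using ndeg by blast
    qed
    then show "implicit_mwl y x (last \<alpha>)"
      unfolding implicit_mwl_def mod_weiner_links_def a_def[symmetric] using L as by blast
  next
    assume "implicit_mwl y x (last \<alpha>)"
    then have x: "x \<in> Lset y" and n: "a # x \<notin> Lset y"
      unfolding implicit_mwl_def mod_weiner_links_def a_def[symmetric] by auto
    have "\<alpha> @ x \<notin> Lset y"
      using n Lset_suffix[of \<beta> "a # x" y] b by auto
    then show "x \<in> Lset y \<and> \<alpha> @ x \<notin> Lset y" using x by simp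
  qed
qed

end
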